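(* Let $\alpha,\beta,\gamma,\delta\in\mathbb{R}$ with $\alpha+\delta\neq 0$ and $\alpha\gamma=0$, and let $G_7$ be the connected, simply connected Lie group whose Lie algebra $\mathfrak{g}_7$ has a basis $\{e_1,e_2,e_3\}$ with $[e_1,e_2]=-\alpha e_1-\beta e_2-\beta e_3$, $[e_1,e_3]=\alpha e_1+\beta e_2+\beta e_3$, $[e_2,e_3]=\gamma e_1+\delta e_2+\delta e_3$, equipped with the left-invariant Lorentzian metric $g$ for which $\{e_1,e_2,e_3\}$ is pseudo-orthonormal with $e_3$ timelike. Let $\lambda_0,c\in\mathbb{R}$. Then there exists a derivation $D$ of $\mathfrak{g}_7$ with $\mathrm{Ric}=(s\lambda_0+c)\mathrm{Id}+D$ (i.e. $(G_7,g)$ is an algebraic Schouten soliton associated to the Levi-Civita connection) if and only if $\gamma=0$ and $c=0$.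
   Context: Pseudo-orthonormal means $g(e_1,e_1)=g(e_2,e_2)=1$, $g(e_3,e_3)=-1$, $g(e_i,e_j)=0$ for $i\neq j$; left-invariant tensors are identified with their values on $\mathfrak{g}$. $\nabla$ is the Levi-Civita connection of $g$, with curvature $R(X,Y)Z=\nabla_X\nabla_YZ-\nabla_Y\nabla_XZ-\nabla_{[X,Y]}Z$. The Ricci tensor is $\rho(X,Y)=-g(R(X,e_1)Y,e_1)-g(R(X,e_2)Y,e_2)+g(R(X,e_3)Y,e_3)$, the Ricci operator $\mathrm{Ric}$ is defined by $\rho(X,Y)=g(\mathrm{Ric}(X),Y)$, and the scalar curvature is $s=\rho(e_1,e_1)+\rho(e_2,e_2)-\rho(e_3,e_3)$. A derivation of $\mathfrak{g}$ is a linear map $D:\mathfrak{g}\to\mathfrak{g}$ with $D[X,Y]=[DX,Y]+[X,DY]$ for all $X,Y\in\mathfrak{g}$. $(G,g)$ is called an algebraic Schouten soliton associated to $\nabla$ (with real constants $\lambda_0$, $c$) if $\mathrm{Ric}=(s\lambda_0+c)\mathrm{Id}+D$ for some derivation $D$. *)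

theory Defs
  imports "HOL-Analysis.Analysis"
begin

text \<open>The three-dimensional Lie algebra is modelled as real^3; left-invariant
tensors are identified with their values on the Lie algebra.
Basis vectors e 1, e 2, e 3 are the standard axes.\<close>

type_synonym vec3 = "real ^ 3"

definition e :: "3 \<Rightarrow> vec3" where
  "e i = axis i 1"

definition gL :: "vec3 \<Rightarrow> vec3 \<Rightarrow> real" where
  "gL X Y = X$1 * Y$1 + X$2 * Y$2 - X$3 * Y$3"

definition br7 :: "real \<Rightarrow> real \<Rightarrow> real \<Rightarrow> real \<Rightarrow> vec3 \<Rightarrow> vec3 \<Rightarrow> vec3" where
  "br7 \<alpha> \<beta> \<gamma> \<delta> X Y =
     (X$1 * Y$2 - X$2 * Y$1) *\<^sub>R ((-\<alpha>) *\<^sub>R e 1 - \<beta> *\<^sub>R e 2 - \<beta> *\<^sub>R e 3)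
   + (X$1 * Y$3 - X$3 * Y$1) *\<^sub>R (\<alpha> *\<^sub>R e 1 + \<beta> *\<^sub>R e 2 + \<beta> *\<^sub>R e 3)
   + (X$2 * Y$3 - X$3 * Y$2) *\<^sub>R (\<gamma> *\<^sub>R e 1 + \<delta> *\<^sub>R e 2 + \<delta> *\<^sub>R e 3)"

text \<open>Levi-Civita connection of a left-invariant metric, via the Koszul formula
  g(nabla_X Y, Z) = 1/2 (g([X,Y],Z) - g([Y,Z],X) + g([Z,X],Y)).\<close>
definition LC :: "(vec3 \<Rightarrow> vec3 \<Rightarrow> vec3) \<Rightarrow> vec3 \<Rightarrow> vec3 \<Rightarrow> vec3" where
  "LC br X Y = (THE V. \<forall>Z. gL V Z =
       (gL (br X Y) Z - gL (br Y Z) X + gL (br Z X) Y) / 2)"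

definition curv :: "(vec3 \<Rightarrow> vec3 \<Rightarrow> vec3) \<Rightarrow> vec3 \<Rightarrow> vec3 \<Rightarrow> vec3 \<Rightarrow> vec3" where
  "curv br X Y Z = LC br X (LC br Y Z) - LC br Y (LC br X Z) - LC br (br X Y) Z"

definition ricci :: "(vec3 \<Rightarrow> vec3 \<Rightarrow> vec3) \<Rightarrow> vec3 \<Rightarrow> vec3 \<Rightarrow> real" where
  "ricci br X Y = - gL (curv br X (e 1) Y) (e 1) - gL (curv br X (e 2) Y) (e 2)
                  + gL (curv br X (e 3) Y) (e 3)"

definition RicOp :: "(vec3 \<Rightarrow> vec3 \<Rightarrow> vec3) \<Rightarrow> vec3 \<Rightarrow> vec3" where
  "RicOp br X = (THE V. \<forall>Y. ricci br X Y = gL V Y)"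

definition scal :: "(vec3 \<Rightarrow> vec3 \<Rightarrow> vec3) \<Rightarrow> real" where
  "scal br = ricci br (e 1) (e 1) + ricci br (e 2) (e 2) - ricci br (e 3) (e 3)"

definition is_derivation :: "(vec3 \<Rightarrow> vec3 \<Rightarrow> vec3) \<Rightarrow> (vec3 \<Rightarrow> vec3) \<Rightarrow> bool" where
  "is_derivation br D \<longleftrightarrow> linear D \<and> (\<forall>X Y. D (br X Y) = br (D X) Y + br X (D Y))"

definition algebraic_schouten_soliton ::
  "(vec3 \<Rightarrow> vec3 \<Rightarrow> vec3) \<Rightarrow> real \<Rightarrow> real \<Rightarrow> bool" where
  "algebraic_schouten_soliton br lam0 c \<longleftrightarrow>
     (\<exists>D. is_derivation br D \<and> RicOp br = (\<lambda>X. (scal br * lam0 + c) *\<^sub>R X + D X))"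

end

theory Submission
  imports Defs
begin

lemma e_comp[simp]: "e 1 $ 1 = 1" "e 1 $ 2 = 0" "e 1 $ 3 = 0"
  "e 2 $ 1 = 0" "e 2 $ 2 = 1" "e 2 $ 3 = 0" "e 3 $ 1 = 0" "e 3 $ 2 = 0" "e 3 $ 3 = 1"
  by (simp_all add: e_def axis_def)

lemma the_gL:
  assumes "\<forall>Z. f Z = Z$1 * a + Z$2 * b + Z$3 * c"
  shows "(THE V. \<forall>Z. gL V Z = f Z) = vector [a, b, -c]"
proof (rule the_equality)
  show "\<forall>Z. gL (vector [a, b, - c]) Z = f Z" using assms by (simp add: gL_def algebra_simps)
next
  fix V assume h: "\<forall>Z. gL V Z = f Z"
  have 1: "V$1 = a" using h[rule_format, of "e 1"] assms by (simp add: gL_def)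
  have 2: "V$2 = b" using h[rule_format, of "e 2"] assms by (simp add: gL_def)
  have 3: "V$3 = -c" using h[rule_format, of "e 3"] assms by (simp add: gL_def)
  show "V = vector [a, b, -c]" using 1 2 3 by (simp add: vec_eq_iff forall_3)
qed

definition kz :: "(vec3 \<Rightarrow> vec3 \<Rightarrow> vec3) \<Rightarrow> vec3 \<Rightarrow> vec3 \<Rightarrow> vec3 \<Rightarrow> real" where
  "kz br X Y Z = (gL (br X Y) Z - gL (br Y Z) X + gL (br Z X) Y) / 2"

lemma br7_comp[simp]:
  "br7 \<alpha> \<beta> \<gamma> \<delta> X Y $ 1 = (X$1 * Y$2 - X$2 * Y$1) * (-\<alpha>) + (X$1 * Y$3 - X$3 * Y$1) * \<alpha> + (X$2 * Y$3 - X$3 * Y$2) * \<gamma>"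
  "br7 \<alpha> \<beta> \<gamma> \<delta> X Y $ 2 = (X$1 * Y$2 - X$2 * Y$1) * (-\<beta>) + (X$1 * Y$3 - X$3 * Y$1) * \<beta> + (X$2 * Y$3 - X$3 * Y$2) * \<delta>"
  "br7 \<alpha> \<beta> \<gamma> \<delta> X Y $ 3 = (X$1 * Y$2 - X$2 * Y$1) * (-\<beta>) + (X$1 * Y$3 - X$3 * Y$1) * \<beta> + (X$2 * Y$3 - X$3 * Y$2) * \<delta>"
  by (simp_all add: br7_def algebra_simps)

lemma LC7: "LC (br7 \<alpha> \<beta> \<gamma> \<delta>) X Y = vector [kz (br7 \<alpha> \<beta> \<gamma> \<delta>) X Y (e 1), kz (br7 \<alpha> \<beta> \<gamma> \<delta>) X Y (e 2), - kz (br7 \<alpha> \<beta> \<gamma> \<delta>) X Y (e 3)]"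
  unfolding LC_def kz_def[symmetric]
  by (rule the_gL) (simp add: kz_def gL_def field_simps; algebra)

lemma LC7c[simp]:
  "LC (br7 \<alpha> \<beta> \<gamma> \<delta>) X Y $ 1 = kz (br7 \<alpha> \<beta> \<gamma> \<delta>) X Y (e 1)"
  "LC (br7 \<alpha> \<beta> \<gamma> \<delta>) X Y $ 2 = kz (br7 \<alpha> \<beta> \<gamma> \<delta>) X Y (e 2)"
  "LC (br7 \<alpha> \<beta> \<gamma> \<delta>) X Y $ 3 = - kz (br7 \<alpha> \<beta> \<gamma> \<delta>) X Y (e 3)"
  by (simp_all add: LC7)

definition rho7 :: "real \<Rightarrow> real \<Rightarrow> real \<Rightarrow> real \<Rightarrow> vec3 \<Rightarrow> vec3 \<Rightarrow> real" where
  "rho7 a b g d X Y =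
   X$1*Y$1*(-(g*g)/2) + (X$1*Y$2 + X$2*Y$1)*(a*g) - (X$1*Y$3 + X$3*Y$1)*(a*g)
 + X$2*Y$2*(g*g/2 - b*g + a*d - a*a) + (X$2*Y$3+X$3*Y$2)*(b*g - a*d + a*a)
 + X$3*Y$3*(-(g*g)/2 - b*g + a*d - a*a)"

lemma ricci7: "ricci (br7 \<alpha> \<beta> \<gamma> \<delta>) X Y = rho7 \<alpha> \<beta> \<gamma> \<delta> X Y"
  unfolding ricci_def curv_def rho7_def
  by (simp add: gL_def kz_def field_simps power2_eq_square)

lemma RicOp7: "RicOp (br7 a b g d) X = vector [rho7 a b g d X (e 1), rho7 a b g d X (e 2), - rho7 a b g d X (e 3)]"
  unfolding RicOp_def ricci7 eq_commute[of "rho7 a b g d X _"]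
  by (rule the_gL) (simp add: rho7_def algebra_simps)

lemma scal7: "scal (br7 a b g d) = g*g/2"
  unfolding scal_def ricci7 by (simp add: rho7_def)

lemma red:
  "(\<exists>D. is_derivation br D \<and> R = (\<lambda>X. k *\<^sub>R X + D X)) \<longleftrightarrow> is_derivation br (\<lambda>X. R X - k *\<^sub>R X)"
proof
  assume "\<exists>D. is_derivation br D \<and> R = (\<lambda>X. k *\<^sub>R X + D X)"
  then obtain D where "is_derivation br D" "R = (\<lambda>X. k *\<^sub>R X + D X)" by blast
  moreover have "(\<lambda>X. R X - k *\<^sub>R X) = D" using calculation(2) by auto
  ultimately show "is_derivation br (\<lambda>X. R X - k *\<^sub>R X)" by simp
next
  assume "is_derivation br (\<lambda>X. R X - k *\<^sub>R X)"
  then show "\<exists>D. is_derivation br D \<and> R = (\<lambda>X. k *\<^sub>R X + D X)"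
    by (intro exI[of _ "\<lambda>X. R X - k *\<^sub>R X"]) auto
qed

theorem theorem3p8:
  fixes \<alpha> \<beta> \<gamma> \<delta> lam0 c :: real
  assumes "\<alpha> + \<delta> \<noteq> 0" and "\<alpha> * \<gamma> = 0"
  shows "(\<exists>D. is_derivation (br7 \<alpha> \<beta> \<gamma> \<delta>) D \<and>
            RicOp (br7 \<alpha> \<beta> \<gamma> \<delta>) =
              (\<lambda>X. (scal (br7 \<alpha> \<beta> \<gamma> \<delta>) * lam0 + c) *\<^sub>R X + D X))
         \<longleftrightarrow> (\<gamma> = 0 \<and> c = 0)"
  unfolding red
proof
  let ?D = "\<lambda>X. RicOp (br7 \<alpha> \<beta> \<gamma> \<delta>) X - (scal (br7 \<alpha> \<beta> \<gamma> \<delta>) * lam0 + c) *\<^sub>R X"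
  let ?b = "br7 \<alpha> \<beta> \<gamma> \<delta>"
  assume h: "is_derivation ?b ?D"
  then have hd: "\<And>X Y. ?D (?b X Y) - ?b (?D X) Y - ?b X (?D Y) = 0"
    unfolding is_derivation_def by simp
  have E121: "3/2*\<alpha>*\<gamma>^2 - \<alpha>*\<gamma>^2*lam0/2 - \<alpha>*c = 0"
    using arg_cong[OF hd[of "e 1" "e 2"], of "\<lambda>v. v$1"]
    by (simp add: RicOp7 rho7_def scal7 field_simps power2_eq_square)
  have E231: "\<gamma>*(-3/2*\<gamma>^2 + \<gamma>^2*lam0/2 + c) = 0"
    using arg_cong[OF hd[of "e 2" "e 3"], of "\<lambda>v. v$1"]
    by (simp add: RicOp7 rho7_def scal7 field_simps power2_eq_square)
  have E232: "\<alpha>*\<gamma>^2 - \<gamma>^2*\<delta>/2 + \<gamma>^2*\<delta>*lam0/2 + \<delta>*c = 0"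
    using arg_cong[OF hd[of "e 2" "e 3"], of "\<lambda>v. v$2"]
    by (simp add: RicOp7 rho7_def scal7 field_simps power2_eq_square)
  have g0: "\<gamma> = 0"
  proof (rule ccontr)
    assume gn: "\<gamma> \<noteq> 0"
    then have a0: "\<alpha> = 0" using assms(2) by simp
    have "-3/2*\<gamma>^2 + \<gamma>^2*lam0/2 + c = 0" using E231 gn by simp
    then have cc: "c = 3/2*\<gamma>^2 - \<gamma>^2*lam0/2" by simp
    have "\<delta> * \<gamma>^2 = 0" using E232 a0 unfolding cc by (simp add: algebra_simps)
    then have "\<delta> = 0" using gn by simp
    then show False using assms(1) a0 by simp
  qed
  have "\<alpha> * c = 0" using E121 g0 by simp
  moreover have "\<delta> * c = 0" using E232 g0 by simp
  ultimately have "(\<alpha> + \<delta>) * c = 0" by (simp only: distrib_right)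
  then have "c = 0" using assms(1) by simp
  then show "\<gamma> = 0 \<and> c = 0" using g0 by simp
next
  assume "\<gamma> = 0 \<and> c = 0"
  then have g: "\<gamma> = 0" and c: "c = 0" by auto
  show "is_derivation (br7 \<alpha> \<beta> \<gamma> \<delta>) (\<lambda>X. RicOp (br7 \<alpha> \<beta> \<gamma> \<delta>) X - (scal (br7 \<alpha> \<beta> \<gamma> \<delta>) * lam0 + c) *\<^sub>R X)"
    unfolding is_derivation_def
  proof
    show "linear (\<lambda>X. RicOp (br7 \<alpha> \<beta> \<gamma> \<delta>) X - (scal (br7 \<alpha> \<beta> \<gamma> \<delta>) * lam0 + c) *\<^sub>R X)"
      by (rule linearI) (simp_all add: RicOp7 rho7_def scal7 vec_eq_iff forall_3 algebra_simps)
    show "\<forall>X Y. RicOp (br7 \<alpha> \<beta> \<gamma> \<delta>) (br7 \<alpha> \<beta> \<gamma> \<delta> X Y) - (scal (br7 \<alpha> \<beta> \<gamma> \<delta>) * lam0 + c) *\<^sub>R br7 \<alpha> \<beta> \<gamma> \<delta> X Y =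
      br7 \<alpha> \<beta> \<gamma> \<delta> (RicOp (br7 \<alpha> \<beta> \<gamma> \<delta>) X - (scal (br7 \<alpha> \<beta> \<gamma> \<delta>) * lam0 + c) *\<^sub>R X) Y +
      br7 \<alpha> \<beta> \<gamma> \<delta> X (RicOp (br7 \<alpha> \<beta> \<gamma> \<delta>) Y - (scal (br7 \<alpha> \<beta> \<gamma> \<delta>) * lam0 + c) *\<^sub>R Y)"
      using g c by (simp add: RicOp7 rho7_def scal7 vec_eq_iff forall_3 algebra_simps)
  qed
qed

end
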